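(* If $W\subseteq\ell^\infty$ is analytic with respect to the product topology on $\mathbb R^\omega$, then $\mathsf{HC}^*(W)=\bigcap_{w\in W}\mathsf{HC}(w)$ is a co-analytic subset of $\ell^2$.
   Context: $\omega=\{0,1,2,\dots\}$. $\ell^\infty$ is the set of bounded real sequences indexed by $\omega$, viewed as a subset of $\mathbb R^\omega$ with the product topology. $\ell^2$ is the Hilbert space of square-summable real sequences with its norm topology. For $w\in\ell^\infty$, $B_w:\ell^2\to\ell^2$ is $B_w(x)(i)=w(i)\,x(i+1)$. $\mathsf{HC}(w)$ is the set of $x\in\ell^2$ such that $\{B_w^k(x):k\in\omega\}$ is dense in $\ell^2$, and $\mathsf{HC}^*(W)=\bigcap_{w\in W}\mathsf{HC}(w)$. A set is analytic if it is a continuous image of a Borel subset of a Polish space, co-analytic if its complement is analytic. *)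

theory Defs
  imports "HOL-Analysis.Analysis"
begin

definition Polish_space :: "'a topology \<Rightarrow> bool" where
  "Polish_space X \<longleftrightarrow> completely_metrizable_space X \<and> separable_space X"

definition borel_sets_of :: "'a topology \<Rightarrow> 'a set set" where
  "borel_sets_of X = sigma_sets (topspace X) {U. openin X U}"

text \<open>Every Polish space is homeomorphic to a (subspace) topology on a subset
  of the type nat => real (it embeds in the Hilbert cube), so quantifying over Polish
  topologies on that type covers all Polish spaces up to homeomorphism.\<close>
definition analytic_in :: "'b topology \<Rightarrow> 'b set \<Rightarrow> bool" where
  "analytic_in X A \<longleftrightarrow>
     (\<exists>(Y :: (nat \<Rightarrow> real) topology) B f.
        Polish_space Y \<and> B \<in> borel_sets_of Y \<and>
        continuous_map (subtopology Y B) X f \<and> f ` B = A)"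

definition coanalytic_in :: "'b topology \<Rightarrow> 'b set \<Rightarrow> bool" where
  "coanalytic_in X A \<longleftrightarrow> A \<subseteq> topspace X \<and> analytic_in X (topspace X - A)"

definition linfty :: "(nat \<Rightarrow> real) set" where
  "linfty = {w. bounded (range w)}"

definition prod_top :: "(nat \<Rightarrow> real) topology" where
  "prod_top = product_topology (\<lambda>_. euclideanreal) UNIV"

definition l2 :: "(nat \<Rightarrow> real) set" where
  "l2 = {x. summable (\<lambda>i. (x i)\<^sup>2)}"

definition l2_norm :: "(nat \<Rightarrow> real) \<Rightarrow> real" where
  "l2_norm x = sqrt (\<Sum>i. (x i)\<^sup>2)"

definition l2_top :: "(nat \<Rightarrow> real) topology" where
  "l2_top = topology_generated_by
     {{y \<in> l2. l2_norm (y - x) < e} | x e. x \<in> l2 \<and> e > 0}"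

definition B :: "(nat \<Rightarrow> real) \<Rightarrow> (nat \<Rightarrow> real) \<Rightarrow> (nat \<Rightarrow> real)" where
  "B w x = (\<lambda>i. w i * x (Suc i))"

definition HC :: "(nat \<Rightarrow> real) \<Rightarrow> (nat \<Rightarrow> real) set" where
  "HC w = {x \<in> l2. l2_top closure_of (range (\<lambda>k. (B w ^^ k) x)) = l2}"

definition HC_star :: "(nat \<Rightarrow> real) set \<Rightarrow> (nat \<Rightarrow> real) set" where
  "HC_star W = {x \<in> l2. \<forall>w \<in> W. x \<in> HC w}"

end

theory Submission
  imports Defs "HOL-Library.Function_Algebras"
begin


lemma l2_iff: "x \<in> l2 \<longleftrightarrow> summable (\<lambda>i. (x i)\<^sup>2)"
  by (simp add: l2_def)

lemma l2_diff: assumes "x \<in> l2" "y \<in> l2" shows "x - y \<in> l2"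
proof -
  have "summable (\<lambda>i. 2 * (x i)\<^sup>2 + 2 * (y i)\<^sup>2)"
    using assms by (intro summable_add summable_mult) (auto simp: l2_iff)
  moreover have "norm (((x - y) i)\<^sup>2) \<le> 2 * (x i)\<^sup>2 + 2 * (y i)\<^sup>2" for i
  proof -
    have "0 \<le> (x i + y i) * (x i + y i)" "0 \<le> (x i - y i) * (x i - y i)" by simp_all
    then show ?thesis by (simp add: power2_eq_square algebra_simps)
  qed
  ultimately show ?thesis unfolding l2_iff by (rule summable_comparison_test'[where N=0])
qed

lemma l2_uminus: "x \<in> l2 \<Longrightarrow> - x \<in> l2"
  by (simp add: l2_iff)


lemma l2_norm_nonneg: "x \<in> l2 \<Longrightarrow> l2_norm x \<ge> 0"
  by (simp add: l2_norm_def l2_iff suminf_nonneg)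

lemma l2_norm_sq: "x \<in> l2 \<Longrightarrow> (l2_norm x)\<^sup>2 = (\<Sum>i. (x i)\<^sup>2)"
  unfolding l2_norm_def l2_iff by (intro real_sqrt_pow2 suminf_nonneg) auto


lemma sqrt_le_sq: assumes "0 \<le> c" shows "sqrt s \<le> c \<longleftrightarrow> s \<le> c\<^sup>2"
proof -
  have "sqrt s \<le> c \<longleftrightarrow> sqrt s \<le> sqrt (c\<^sup>2)" using assms by simp
  also have "\<dots> \<longleftrightarrow> s \<le> c\<^sup>2" by (rule real_sqrt_le_iff)
  finally show ?thesis .
qed

lemma l2_partial_le: "x \<in> l2 \<Longrightarrow> (\<Sum>i<n. (x i)\<^sup>2) \<le> (\<Sum>i. (x i)\<^sup>2)"
  unfolding l2_iff by (rule sum_le_suminf) auto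

lemma l2_coord_le: assumes "x \<in> l2" shows "\<bar>x i\<bar> \<le> l2_norm x"
proof -
  have "(x i)\<^sup>2 \<le> (\<Sum>j<Suc i. (x j)\<^sup>2)" by (rule member_le_sum) auto
  also have "\<dots> \<le> (\<Sum>j. (x j)\<^sup>2)" using l2_partial_le[OF assms] .
  finally have "sqrt ((x i)\<^sup>2) \<le> sqrt (\<Sum>j. (x j)\<^sup>2)" by (rule real_sqrt_le_mono)
  then show ?thesis unfolding l2_norm_def by simp
qed

lemma l2_norm_zero: "x \<in> l2 \<Longrightarrow> l2_norm x = 0 \<longleftrightarrow> x = 0"
proof
  assume "x \<in> l2" "l2_norm x = 0"
  then have "\<bar>x i\<bar> \<le> 0" for i using l2_coord_le[of x i] by simp
  then show "x = 0" by (auto simp: fun_eq_iff)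
qed (simp add: l2_norm_def)

lemma l2_norm_commute: "l2_norm (x - y) = l2_norm (y - x)"
  unfolding l2_norm_def by (simp add: power2_commute)

lemma l2_triangle: assumes "x \<in> l2" "y \<in> l2" shows "l2_norm (x - y) \<le> l2_norm x + l2_norm y"
proof -
  have "(\<Sum>i<n. ((x - y) i)\<^sup>2) \<le> (l2_norm x + l2_norm y)\<^sup>2" for n
  proof -
    have "sqrt (\<Sum>i<n. ((x - y) i)\<^sup>2) = L2_set (\<lambda>i. x i + (- y) i) {..<n}" by (simp add: L2_set_def)
    also have "\<dots> \<le> L2_set x {..<n} + L2_set (- y) {..<n}" by (rule L2_set_triangle_ineq)
    also have "\<dots> = L2_set x {..<n} + L2_set y {..<n}" by (simp add: L2_set_def)
    also have "\<dots> \<le> l2_norm x + l2_norm y"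
      unfolding L2_set_def l2_norm_def
      by (intro add_mono real_sqrt_le_mono l2_partial_le[unfolded l2_iff] assms[unfolded l2_iff])
    finally have h: "sqrt (\<Sum>i<n. ((x - y) i)\<^sup>2) \<le> l2_norm x + l2_norm y" .
    have "0 \<le> l2_norm x + l2_norm y" using l2_norm_nonneg[OF assms(1)] l2_norm_nonneg[OF assms(2)] by linarith
    then show ?thesis using sqrt_le_sq h by blast
  qed
  then have "(\<Sum>i. ((x - y) i)\<^sup>2) \<le> (l2_norm x + l2_norm y)\<^sup>2"
    using l2_diff[OF assms] by (intro suminf_le_const) (auto simp: l2_iff)
  moreover have "0 \<le> l2_norm x + l2_norm y" using l2_norm_nonneg[OF assms(1)] l2_norm_nonneg[OF assms(2)] by linarith
  ultimately show ?thesis unfolding l2_norm_def[of "x-y"] using sqrt_le_sq by blast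
qed

definition l2d :: "(nat \<Rightarrow> real) \<Rightarrow> (nat \<Rightarrow> real) \<Rightarrow> real" where
  "l2d x y = (if x \<in> l2 \<and> y \<in> l2 then l2_norm (y - x) else 0)"

lemma l2_metric: "Metric_space l2 l2d"
proof
  fix x y z assume xyz: "x \<in> l2" "y \<in> l2" "z \<in> l2"
  show "l2d x y = 0 \<longleftrightarrow> x = y" using xyz(1,2) l2_norm_zero[OF l2_diff[OF xyz(2,1)]]
    by (auto simp: l2d_def)
  have "l2_norm ((y - x) - (y - z)) \<le> l2_norm (y - x) + l2_norm (y - z)"
    using xyz by (intro l2_triangle l2_diff)
  then show "l2d x z \<le> l2d x y + l2d y z" using xyz by (simp add: l2d_def l2_norm_commute[of y z])
qed (auto simp: l2d_def l2_norm_nonneg l2_norm_commute l2_diff)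


interpretation L2M: Metric_space l2 l2d by (rule l2_metric)

lemma l2d_eq: "x \<in> l2 \<Longrightarrow> y \<in> l2 \<Longrightarrow> l2d x y = l2_norm (y - x)"
  by (simp add: l2d_def)

lemma l2d_coord: assumes "x \<in> l2" "y \<in> l2" shows "\<bar>x i - y i\<bar> \<le> l2d x y"
proof -
  have "\<bar>(y - x) i\<bar> \<le> l2_norm (y - x)" by (rule l2_coord_le[OF l2_diff[OF assms(2,1)]])
  moreover have "\<bar>(y - x) i\<bar> = \<bar>x i - y i\<bar>" by (simp only: minus_apply abs_minus_commute)
  ultimately show ?thesis using assms by (simp only: l2d_eq)
qed

lemma l2d_sq: assumes "x \<in> l2" "y \<in> l2" shows "(l2d x y)\<^sup>2 = (\<Sum>i. (x i - y i)\<^sup>2)"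
proof -
  have e: "(\<lambda>i. ((y - x) i)\<^sup>2) = (\<lambda>i. (x i - y i)\<^sup>2)"
    by (rule ext) (simp only: minus_apply power2_commute)
  show ?thesis using l2_norm_sq[OF l2_diff[OF assms(2,1)]] assms by (simp only: l2d_eq e)
qed

lemma l2_mball: "x \<in> l2 \<Longrightarrow> L2M.mball x e = {y \<in> l2. l2_norm (y - x) < e}"
proof (rule set_eqI)
  fix y assume "x \<in> l2"
  show "y \<in> L2M.mball x e \<longleftrightarrow> y \<in> {y \<in> l2. l2_norm (y - x) < e}"
    using l2d_eq[OF \<open>x \<in> l2\<close>, of y] \<open>x \<in> l2\<close> by (cases "y \<in> l2") simp_all
qed

lemma l2_top_eq: "l2_top = L2M.mtopology"
proof -
  let ?S = "{{y \<in> l2. l2_norm (y - x) < e} | x e. x \<in> l2 \<and> e > 0}"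
  have "generate_topology_on ?S U \<longleftrightarrow> openin L2M.mtopology U" for U
  proof
    assume "generate_topology_on ?S U"
    then show "openin L2M.mtopology U"
    proof induct
      case Empty
      then show ?case by simp
    next
      case (Int a b)
      then show ?case using openin_Int by blast
    next
      case (UN K)
      then show ?case by (intro openin_Union) blast
    next
      case (Basis s)
      then obtain x e where "x \<in> l2" "s = {y \<in> l2. l2_norm (y - x) < e}" by blast
      then have "s = L2M.mball x e" using l2_mball by simp
      then show ?case by simp
    qed
  next
    assume U: "openin L2M.mtopology U"
    have "U = \<Union>{L2M.mball x r | x r. x \<in> U \<and> r > 0 \<and> L2M.mball x r \<subseteq> U}"
    proof (rule equalityI; rule subsetI)
      fix x assume "x \<in> U"
      then obtain r where "r > 0" "L2M.mball x r \<subseteq> U" "x \<in> l2"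
        using U unfolding L2M.openin_mtopology by blast
      then show "x \<in> \<Union>{L2M.mball x r | x r. x \<in> U \<and> r > 0 \<and> L2M.mball x r \<subseteq> U}"
        using \<open>x \<in> U\<close> L2M.centre_in_mball_iff by blast
    qed blast
    moreover have "generate_topology_on ?S (\<Union>{L2M.mball x r | x r. x \<in> U \<and> r > 0 \<and> L2M.mball x r \<subseteq> U})"
    proof (rule generate_topology_on.UN, clarify)
      fix x and r :: real assume "x \<in> U" "r > 0"
      then have "x \<in> l2" using U L2M.openin_mtopology by blast
      then have "L2M.mball x r = {y \<in> l2. l2_norm (y - x) < r}" by (rule l2_mball)
      then have "L2M.mball x r \<in> ?S" using \<open>x \<in> l2\<close> \<open>r > 0\<close> by blast
      then show "generate_topology_on ?S (L2M.mball x r)"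
        by (rule generate_topology_on.Basis)
    qed
    ultimately show "generate_topology_on ?S U" by simp
  qed
  then show ?thesis unfolding l2_top_def
    by (simp add: topology_eq openin_topology_generated_by_iff)
qed

lemma topspace_l2_top: "topspace l2_top = l2"
  by (simp add: l2_top_eq)

lemma l2_complete: "L2M.mcomplete"
  unfolding L2M.mcomplete_def
proof (intro allI impI)
  fix \<sigma> assume C: "L2M.MCauchy \<sigma>"
  then have sl2: "\<sigma> n \<in> l2" for n by (auto simp: L2M.MCauchy_def)
  from C have Ca: "\<exists>N. \<forall>n n'. N \<le> n \<longrightarrow> N \<le> n' \<longrightarrow> l2d (\<sigma> n) (\<sigma> n') < e" if "e > 0" for e
    using that by (auto simp: L2M.MCauchy_def)
  have "Cauchy (\<lambda>n. \<sigma> n i)" for i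
  proof (rule metric_CauchyI)
    fix e :: real assume "e > 0"
    then obtain N where N: "\<forall>n n'. N \<le> n \<longrightarrow> N \<le> n' \<longrightarrow> l2d (\<sigma> n) (\<sigma> n') < e" using Ca by blast
    show "\<exists>M. \<forall>m\<ge>M. \<forall>n\<ge>M. dist (\<sigma> m i) (\<sigma> n i) < e"
    proof (intro exI allI impI)
      fix m n assume "N \<le> m" "N \<le> n"
      have "\<bar>\<sigma> m i - \<sigma> n i\<bar> \<le> l2d (\<sigma> m) (\<sigma> n)" by (rule l2d_coord[OF sl2 sl2])
      also have "\<dots> < e" using N \<open>N \<le> m\<close> \<open>N \<le> n\<close> by blast
      finally show "dist (\<sigma> m i) (\<sigma> n i) < e" by (simp add: dist_real_def)
    qed
  qed
  then have "convergent (\<lambda>n. \<sigma> n i)" for i by (simp add: Cauchy_convergent_iff)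
  define y where "y i = lim (\<lambda>n. \<sigma> n i)" for i
  have ylim: "(\<lambda>n. \<sigma> n i) \<longlonglongrightarrow> y i" for i
    using \<open>\<And>i. convergent (\<lambda>n. \<sigma> n i)\<close> by (simp add: y_def convergent_LIMSEQ_iff)
  have key: "\<exists>N. \<forall>n\<ge>N. \<forall>K. (\<Sum>i<K. (\<sigma> n i - y i)\<^sup>2) \<le> e\<^sup>2" if "e > 0" for e
  proof -
    obtain N where N: "\<forall>n n'. N \<le> n \<longrightarrow> N \<le> n' \<longrightarrow> l2d (\<sigma> n) (\<sigma> n') < e" using Ca \<open>e > 0\<close> by blast
    have "(\<Sum>i<K. (\<sigma> n i - y i)\<^sup>2) \<le> e\<^sup>2" if "n \<ge> N" for n K
    proof (rule tendsto_upperbound)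
      show "(\<lambda>m. \<Sum>i<K. (\<sigma> n i - \<sigma> m i)\<^sup>2) \<longlonglongrightarrow> (\<Sum>i<K. (\<sigma> n i - y i)\<^sup>2)"
        by (intro tendsto_intros ylim)
      show "\<forall>\<^sub>F m in sequentially. (\<Sum>i<K. (\<sigma> n i - \<sigma> m i)\<^sup>2) \<le> e\<^sup>2"
        unfolding eventually_sequentially
      proof (intro exI allI impI)
        fix m assume "N \<le> m"
        have "(\<Sum>i<K. (\<sigma> n i - \<sigma> m i)\<^sup>2) \<le> (\<Sum>i. (\<sigma> n i - \<sigma> m i)\<^sup>2)"
          using l2_partial_le[OF l2_diff[OF sl2 sl2], of n m K] by simp
        also have "\<dots> = (l2d (\<sigma> n) (\<sigma> m))\<^sup>2" using l2d_sq[OF sl2 sl2] by simp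
        also have "\<dots> \<le> e\<^sup>2" using N \<open>n \<ge> N\<close> \<open>N \<le> m\<close> 
          by (intro power_mono) (auto intro: less_imp_le)
        finally show "(\<Sum>i<K. (\<sigma> n i - \<sigma> m i)\<^sup>2) \<le> e\<^sup>2" .
      qed
    qed simp
    then show ?thesis by blast
  qed
  obtain N1 where N1: "\<forall>n\<ge>N1. \<forall>K. (\<Sum>i<K. (\<sigma> n i - y i)\<^sup>2) \<le> 1\<^sup>2" using key[of 1] by auto
  have "\<sigma> N1 - y \<in> l2" unfolding l2_iff
    using N1 by (intro summableI_nonneg_bounded[where x=1]) auto
  then have yl2: "y \<in> l2" using l2_diff[OF sl2[of N1] \<open>\<sigma> N1 - y \<in> l2\<close>] by simp
  have "\<forall>\<^sub>F n in sequentially. \<sigma> n \<in> l2 \<and> l2d (\<sigma> n) y < e" if "e > 0" for e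
  proof -
    obtain N where N: "\<forall>n\<ge>N. \<forall>K. (\<Sum>i<K. (\<sigma> n i - y i)\<^sup>2) \<le> (e/2)\<^sup>2" using key[of "e/2"] \<open>e > 0\<close> by auto
    have "l2d (\<sigma> n) y < e" if "n \<ge> N" for n
    proof -
      have "(l2d (\<sigma> n) y)\<^sup>2 = (\<Sum>i. (\<sigma> n i - y i)\<^sup>2)" using l2d_sq[OF sl2 yl2] .
      also have "\<dots> \<le> (e/2)\<^sup>2"
        using N that l2_diff[OF sl2 yl2, of n] by (intro suminf_le_const) (auto simp: l2_iff)
      finally have "l2d (\<sigma> n) y \<le> e/2"
        using \<open>e > 0\<close> by (simp add: power2_le_iff_abs_le)
      then show ?thesis using \<open>e > 0\<close> by simp
    qed
    then show ?thesis using sl2 unfolding eventually_sequentially by (intro exI[of _ N]) simp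
  qed
  then show "\<exists>x. limitin L2M.mtopology \<sigma> x sequentially"
    using yl2 by (auto simp: L2M.limitin_metric)
qed


lemma rat_approx: fixes e a :: real assumes "e > 0" shows "\<exists>q\<in>\<rat>. (q - a)\<^sup>2 < e"
proof -
  obtain q where q: "q \<in> \<rat>" "a < q" "q < a + sqrt e"
    using Rats_dense_in_real[of a "a + sqrt e"] assms by auto
  then have "(q - a)\<^sup>2 < (sqrt e)\<^sup>2"
    by (intro power_strict_mono) auto
  then show ?thesis using q assms by auto
qed

definition l2D :: "(nat \<Rightarrow> real) set" where
  "l2D = (\<Union>K. (\<lambda>f i. if i < K then f i else 0) ` (PiE {..<K} (\<lambda>_. \<rat>)))"

lemma countable_l2D: "countable l2D"
  unfolding l2D_def
  by (intro countable_UN countable_image countable_PiE) (auto simp: countable_rat)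

lemma l2D_sub: "l2D \<subseteq> l2"
proof
  fix c assume "c \<in> l2D"
  then obtain K f where c: "c = (\<lambda>i. if i < K then f i else 0)" unfolding l2D_def by blast
  have "summable (\<lambda>i. (c i)\<^sup>2)"
    by (rule summable_finite[of "{..<K}"]) (auto simp: c)
  then show "c \<in> l2" by (simp add: l2_iff)
qed

lemma l2D_dense: assumes x: "x \<in> l2" and r: "r > 0" shows "\<exists>c\<in>l2D. l2d x c < r"
proof -
  have sx: "summable (\<lambda>i. (x i)\<^sup>2)" using x by (simp add: l2_iff)
  then have "(\<lambda>n. \<Sum>i<n. (x i)\<^sup>2) \<longlonglongrightarrow> (\<Sum>i. (x i)\<^sup>2)" by (rule summable_LIMSEQ)
  then obtain K where K: "\<bar>(\<Sum>i<K. (x i)\<^sup>2) - (\<Sum>i. (x i)\<^sup>2)\<bar> < r\<^sup>2 / 4"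
    using r unfolding lim_sequentially dist_real_def by (metis order.refl zero_less_divide_iff zero_less_numeral zero_less_power)
  define \<epsilon> where "\<epsilon> = r\<^sup>2 / (4 * (real K + 1))"
  have \<epsilon>: "\<epsilon> > 0" using r by (simp add: \<epsilon>_def)
  have "\<forall>i. \<exists>q. q \<in> \<rat> \<and> (q - x i)\<^sup>2 < \<epsilon>" using rat_approx[OF \<epsilon>] by blast
  then obtain q where q: "\<And>i. q i \<in> \<rat>" "\<And>i. (q i - x i)\<^sup>2 < \<epsilon>" by metis
  define c where "c = (\<lambda>i. if i < K then q i else 0)"
  have "restrict q {..<K} \<in> PiE {..<K} (\<lambda>_. \<rat>)" using q(1) by auto
  moreover have "c = (\<lambda>i. if i < K then restrict q {..<K} i else 0)" by (auto simp: c_def)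
  ultimately have cD: "c \<in> l2D" unfolding l2D_def by blast
  have cl2: "c \<in> l2" using cD l2D_sub by blast
  have sdiff: "summable (\<lambda>i. (x i - c i)\<^sup>2)" using l2_diff[OF x cl2] by (simp add: l2_iff)
  have "(l2d x c)\<^sup>2 = (\<Sum>i. (x i - c i)\<^sup>2)" by (rule l2d_sq[OF x cl2])
  also have "\<dots> = (\<Sum>n. (x (n + K) - c (n + K))\<^sup>2) + (\<Sum>i<K. (x i - c i)\<^sup>2)"
    by (rule suminf_split_initial_segment[OF sdiff])
  also have "(\<Sum>n. (x (n + K) - c (n + K))\<^sup>2) = (\<Sum>n. (x (n + K))\<^sup>2)"
    by (simp add: c_def)
  also have "\<dots> = (\<Sum>i. (x i)\<^sup>2) - (\<Sum>i<K. (x i)\<^sup>2)"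
    using suminf_split_initial_segment[OF sx, of K] by simp
  also have "(\<Sum>i<K. (x i - c i)\<^sup>2) \<le> (\<Sum>i<K. \<epsilon>)"
    by (intro sum_mono) (use q(2) in \<open>auto simp: c_def power2_commute less_imp_le\<close>)
  also have "(\<Sum>i<K. \<epsilon>) \<le> r\<^sup>2 / 4"
  proof -
    have "(\<Sum>i<K. \<epsilon>) = real K * r\<^sup>2 / (4 * (real K + 1))" by (simp add: \<epsilon>_def)
    also have "\<dots> \<le> (real K + 1) * r\<^sup>2 / (4 * (real K + 1))"
      by (intro divide_right_mono mult_right_mono) auto
    also have "\<dots> = r\<^sup>2 / 4" by (simp add: field_simps)
    finally show ?thesis .
  qed
  finally have h: "(l2d x c)\<^sup>2 \<le> (\<Sum>i. (x i)\<^sup>2) - (\<Sum>i<K. (x i)\<^sup>2) + r\<^sup>2 / 4" by simp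
  have K': "(\<Sum>i. (x i)\<^sup>2) - (\<Sum>i<K. (x i)\<^sup>2) < r\<^sup>2 / 4" using K unfolding abs_less_iff by linarith
  have "r\<^sup>2 > 0" using r by simp
  then have "(l2d x c)\<^sup>2 < r\<^sup>2" using h K' by linarith
  then have "l2d x c < r" using r by (simp add: power_less_imp_less_base)
  with cD show ?thesis by blast
qed

lemma Polish_l2_top: "Polish_space l2_top"
  unfolding Polish_space_def
proof
  show "completely_metrizable_space l2_top"
    unfolding l2_top_eq by (rule L2M.completely_metrizable_space_mtopology[OF l2_complete])
  show "separable_space l2_top"
    unfolding separable_space_def
  proof (intro exI conjI)
    show "countable l2D" by (rule countable_l2D)
    show "l2D \<subseteq> topspace l2_top" using l2D_sub by (simp add: topspace_l2_top)
    show "l2_top closure_of l2D = topspace l2_top"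
      unfolding l2_top_eq L2M.metric_closure_of L2M.topspace_mtopology
      using l2D_dense l2D_sub by (auto simp: L2M.commute) (meson l2D_dense subsetD)
  qed
qed

lemma continuous_coord_l2: "continuous_map l2_top euclideanreal (\<lambda>x. x i)"
  unfolding l2_top_eq L2M.continuous_map_from_metric
proof (intro conjI ballI allI impI)
  fix a U assume a: "a \<in> l2" and U: "openin euclideanreal U \<and> a i \<in> U"
  then obtain e where e: "e > 0" "\<And>y. dist y (a i) < e \<Longrightarrow> y \<in> U"
    using open_dist[of U] by auto
  show "\<exists>r>0. \<forall>x. x \<in> l2 \<and> l2d a x < r \<longrightarrow> x i \<in> U"
  proof (intro exI conjI allI impI)
    fix x assume "x \<in> l2 \<and> l2d a x < e"
    then have "\<bar>a i - x i\<bar> < e" using l2d_coord[OF a, of x i] by linarith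
    then show "x i \<in> U" using e(2)[of "x i"] by (simp add: dist_real_def abs_minus_commute)
  qed (rule e(1))
qed auto



lemma B_pow: "(B w ^^ k) x i = (\<Prod>j<k. w (i + j)) * x (i + k)"
proof (induction k arbitrary: i)
  case 0
  then show ?case by simp
next
  case (Suc k)
  have "(B w ^^ Suc k) x i = w i * (B w ^^ k) x (Suc i)" by (simp add: B_def)
  also have "\<dots> = w i * ((\<Prod>j<k. w (Suc i + j)) * x (Suc i + k))" by (simp only: Suc.IH)
  also have "\<dots> = (\<Prod>j<Suc k. w (i + j)) * x (i + Suc k)"
    by (simp add: prod.lessThan_Suc_shift del: prod.lessThan_Suc)
  finally show ?case .
qed

lemma B_l2: assumes w: "w \<in> linfty" and x: "x \<in> l2" shows "B w x \<in> l2"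
proof -
  obtain M where M: "\<And>i. norm (w i) \<le> M" using w unfolding linfty_def bounded_iff by auto
  have "summable (\<lambda>i. (x (Suc i))\<^sup>2)" using x summable_Suc_iff[of "\<lambda>i. (x i)\<^sup>2"] by (simp add: l2_iff)
  then have s: "summable (\<lambda>i. M\<^sup>2 * (x (Suc i))\<^sup>2)" by (rule summable_mult)
  have "norm ((B w x i)\<^sup>2) \<le> M\<^sup>2 * (x (Suc i))\<^sup>2" for i
  proof -
    have "\<bar>w i\<bar> \<le> M" using M[of i] by simp
    then have "\<bar>w i\<bar>\<^sup>2 \<le> M\<^sup>2" by (intro power_mono) auto
    then have "(w i)\<^sup>2 * (x (Suc i))\<^sup>2 \<le> M\<^sup>2 * (x (Suc i))\<^sup>2" by (intro mult_right_mono) auto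
    then show ?thesis by (simp add: B_def power_mult_distrib)
  qed
  then show ?thesis unfolding l2_iff by (rule summable_comparison_test'[OF s, where N=0])
qed

lemma B_pow_l2: assumes w: "w \<in> linfty" and x: "x \<in> l2" shows "(B w ^^ k) x \<in> l2"
  by (induction k) (auto simp: x B_l2[OF w])

lemma nonneg_suminf_gt: assumes "summable f" "\<And>i. f i \<ge> (0::real)"
  shows "suminf f > r \<longleftrightarrow> (\<exists>n. (\<Sum>i<n. f i) > r)"
proof
  assume "suminf f > r"
  show "\<exists>n. (\<Sum>i<n. f i) > r"
  proof (rule ccontr)
    assume "\<not> ?thesis"
    then have "suminf f \<le> r" using assms by (intro suminf_le_const) (auto simp: not_less)
    then show False using \<open>suminf f > r\<close> by simp
  qed
next
  assume "\<exists>n. (\<Sum>i<n. f i) > r"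
  then obtain n where "(\<Sum>i<n. f i) > r" by blast
  moreover have "(\<Sum>i<n. f i) \<le> suminf f" using assms by (intro sum_le_suminf) auto
  ultimately show "suminf f > r" by simp
qed

lemma notHC_iff:
  assumes w: "w \<in> linfty" and x: "x \<in> l2"
  shows "x \<notin> HC w \<longleftrightarrow>
    (\<exists>c\<in>l2D. \<exists>r\<in>\<rat>. r > 0 \<and> (\<forall>k. (\<Sum>i. ((B w ^^ k) x i - c i)\<^sup>2) > r))"
proof
  let ?O = "range (\<lambda>k. (B w ^^ k) x)"
  have Ol2: "?O \<subseteq> l2" using B_pow_l2[OF w x] by auto
  assume "x \<notin> HC w"
  then have "l2_top closure_of ?O \<noteq> l2" using x by (simp add: HC_def)
  moreover have "l2_top closure_of ?O \<subseteq> l2" using closure_of_subset_topspace[of l2_top ?O]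
    by (simp add: topspace_l2_top)
  ultimately obtain y where y: "y \<in> l2" "y \<notin> l2_top closure_of ?O" by blast
  then obtain e where e: "e > 0" "\<And>k. \<not> (l2d y ((B w ^^ k) x) < e)"
    unfolding l2_top_eq L2M.metric_closure_of using B_pow_l2[OF w x] by auto
  obtain c where c: "c \<in> l2D" "l2d y c < e/2" using l2D_dense[OF y(1), of "e/2"] e(1) by auto
  have cl2: "c \<in> l2" using c(1) l2D_sub by blast
  obtain r where r: "r \<in> \<rat>" "0 < r" "r < (e/2)\<^sup>2" using Rats_dense_in_real[of 0 "(e/2)\<^sup>2"] e(1) by auto
  have "(\<Sum>i. ((B w ^^ k) x i - c i)\<^sup>2) > r" for k
  proof -
    let ?z = "(B w ^^ k) x"
    have zl2: "?z \<in> l2" by (rule B_pow_l2[OF w x])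
    have "l2d y ?z \<le> l2d y c + l2d c ?z" by (rule L2M.triangle[OF y(1) cl2 zl2])
    then have "l2d c ?z > e/2" using e(2)[of k] c(2) by linarith
    then have "(e/2)\<^sup>2 < (l2d c ?z)\<^sup>2" using e(1) by (intro power_strict_mono) auto
    also have "(l2d c ?z)\<^sup>2 = (l2d ?z c)\<^sup>2" by (simp add: L2M.commute)
    also have "\<dots> = (\<Sum>i. (?z i - c i)\<^sup>2)" by (rule l2d_sq[OF zl2 cl2])
    finally show ?thesis using r(3) by linarith
  qed
  then show "\<exists>c\<in>l2D. \<exists>r\<in>\<rat>. r > 0 \<and> (\<forall>k. (\<Sum>i. ((B w ^^ k) x i - c i)\<^sup>2) > r)"
    using c(1) r(1,2) by blast
next
  assume "\<exists>c\<in>l2D. \<exists>r\<in>\<rat>. r > 0 \<and> (\<forall>k. (\<Sum>i. ((B w ^^ k) x i - c i)\<^sup>2) > r)"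
  then obtain c r where c: "c \<in> l2D" "r > 0" "\<And>k. (\<Sum>i. ((B w ^^ k) x i - c i)\<^sup>2) > r" by blast
  have cl2: "c \<in> l2" using c(1) l2D_sub by blast
  have "c \<notin> l2_top closure_of (range (\<lambda>k. (B w ^^ k) x))"
  proof
    assume "c \<in> l2_top closure_of (range (\<lambda>k. (B w ^^ k) x))"
    then obtain k where k: "l2d c ((B w ^^ k) x) < sqrt r"
      unfolding l2_top_eq L2M.metric_closure_of using c(2) real_sqrt_gt_zero by (auto simp del: real_sqrt_gt_0_iff)
    let ?z = "(B w ^^ k) x"
    have zl2: "?z \<in> l2" by (rule B_pow_l2[OF w x])
    have "(l2d c ?z)\<^sup>2 < (sqrt r)\<^sup>2" using k by (intro power_strict_mono) auto
    also have "\<dots> = r" using c(2) by simp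
    also have "r < (\<Sum>i. (?z i - c i)\<^sup>2)" by (rule c(3))
    also have "\<dots> = (l2d ?z c)\<^sup>2" by (rule l2d_sq[OF zl2 cl2, symmetric])
    also have "\<dots> = (l2d c ?z)\<^sup>2" by (simp add: L2M.commute)
    finally show False by simp
  qed
  then show "x \<notin> HC w" using cl2 by (auto simp: HC_def)
qed



lemma borel_preimage:
  assumes h: "continuous_map X Y h" and A: "A \<in> borel_sets_of Y"
  shows "{x \<in> topspace X. h x \<in> A} \<in> borel_sets_of X"
proof -
  have hm: "h \<in> topspace X \<rightarrow> topspace Y" using h by (simp add: continuous_map_funspace)
  have "h -` A \<inter> topspace X \<in> {h -` A \<inter> topspace X |A. A \<in> sigma_sets (topspace Y) {U. openin Y U}}"
    using A by (auto simp: borel_sets_of_def)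
  also have "\<dots> = sigma_sets (topspace X) {h -` A \<inter> topspace X |A. A \<in> {U. openin Y U}}"
    by (rule sigma_sets_vimage_commute[OF hm])
  also have "\<dots> \<subseteq> sigma_sets (topspace X) {U. openin X U}"
  proof (rule sigma_sets_mono')
    show "{h -` A \<inter> topspace X |A. A \<in> {U. openin Y U}} \<subseteq> {U. openin X U}"
    proof clarify
      fix U assume "openin Y U"
      have "h -` U \<inter> topspace X = {x \<in> topspace X. h x \<in> U}" by auto
      then show "openin X (h -` U \<inter> topspace X)"
        using openin_continuous_map_preimage[OF h \<open>openin Y U\<close>] by simp
    qed
  qed
  finally have "h -` A \<inter> topspace X \<in> borel_sets_of X" by (simp add: borel_sets_of_def)
  moreover have "{x \<in> topspace X. h x \<in> A} = h -` A \<inter> topspace X" by auto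
  ultimately show ?thesis by simp
qed

lemma borel_sa: "sigma_algebra (topspace X) (borel_sets_of X)"
  unfolding borel_sets_of_def by (rule sigma_algebra_sigma_sets) (auto dest: openin_subset)

lemma borel_open: "openin X U \<Longrightarrow> U \<in> borel_sets_of X"
  by (simp add: borel_sets_of_def sigma_sets.Basic)

lemma borel_subset: "A \<in> borel_sets_of X \<Longrightarrow> A \<subseteq> topspace X"
  unfolding borel_sets_of_def by (rule sigma_sets_into_sp) (auto dest: openin_subset)

lemma separable_prod:
  assumes "separable_space X" "separable_space Y"
  shows "separable_space (prod_topology X Y)"
proof -
  obtain C1 where C1: "countable C1" "C1 \<subseteq> topspace X" "X closure_of C1 = topspace X"
    using assms(1) unfolding separable_space_def by blast
  obtain C2 where C2: "countable C2" "C2 \<subseteq> topspace Y" "Y closure_of C2 = topspace Y"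
    using assms(2) unfolding separable_space_def by blast
  show ?thesis unfolding separable_space_def
  proof (intro exI conjI)
    show "countable (C1 \<times> C2)" using C1 C2 by simp
    show "C1 \<times> C2 \<subseteq> topspace (prod_topology X Y)" using C1 C2 by auto
    show "prod_topology X Y closure_of (C1 \<times> C2) = topspace (prod_topology X Y)"
      using C1 C2 by (simp add: closure_of_Times)
  qed
qed

definition unpair :: "(nat \<Rightarrow> real) \<Rightarrow> (nat \<Rightarrow> real) \<times> (nat \<Rightarrow> real)" where
  "unpair h = (\<lambda>n. h (2 * n), \<lambda>n. h (2 * n + 1))"

definition pairf :: "(nat \<Rightarrow> real) \<times> (nat \<Rightarrow> real) \<Rightarrow> (nat \<Rightarrow> real)" where
  "pairf q = (\<lambda>m. if even m then fst q (m div 2) else snd q (m div 2))"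

lemma unpair_pairf [simp]: "unpair (pairf q) = q"
  by (cases q) (simp add: unpair_def pairf_def)

lemma pairf_unpair [simp]: "pairf (unpair h) = h"
proof
  fix m
  show "pairf (unpair h) m = h m"
  proof (cases "even m")
    case True
    then show ?thesis by (simp add: unpair_def pairf_def)
  next
    case False
    then have "2 * (m div 2) + 1 = m" by presburger
    then show ?thesis using False by (simp add: unpair_def pairf_def)
  qed
qed

lemma pullback_homeo:
  "homeomorphic_maps (pullback_topology UNIV unpair P) P unpair pairf"
  unfolding homeomorphic_maps_def
proof (intro conjI ballI)
  show "continuous_map (pullback_topology UNIV unpair P) P unpair"
    using continuous_map_pullback[OF continuous_map_id, of UNIV unpair P] by simp
  have "continuous_map P P (unpair \<circ> pairf)" by (simp add: o_def)
  then show "continuous_map P (pullback_topology UNIV unpair P) pairf"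
    by (rule continuous_map_pullback') simp
qed simp_all



theorem proposition1:
  assumes "W \<subseteq> linfty"
    and "analytic_in prod_top W"
  shows "coanalytic_in l2_top (HC_star W)"
proof -
  obtain Y0 :: "(nat \<Rightarrow> real) topology" and B0 g where
    Y0: "Polish_space Y0" and B0: "B0 \<in> borel_sets_of Y0"
    and g: "continuous_map (subtopology Y0 B0) prod_top g" and gW: "g ` B0 = W"
    using assms(2) unfolding analytic_in_def by blast
  have B0sub: "B0 \<subseteq> topspace Y0" by (rule borel_subset[OF B0])
  define P where "P = prod_topology Y0 l2_top"
  have topP: "topspace P = topspace Y0 \<times> l2" by (simp add: P_def topspace_l2_top)
  interpret PS: sigma_algebra "topspace P" "borel_sets_of P" by (rule borel_sa)
  let ?S = "subtopology P (B0 \<times> UNIV)"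
  have fstS: "continuous_map ?S (subtopology Y0 B0) fst"
  proof (rule continuous_map_into_subtopology)
    show "continuous_map ?S Y0 fst" unfolding P_def
      by (rule continuous_map_from_subtopology[OF continuous_map_fst])
    show "fst \<in> topspace ?S \<rightarrow> B0" by auto
  qed
  have gcoord: "continuous_map ?S euclideanreal (\<lambda>p. g (fst p) m)" for m
  proof -
    have "continuous_map ?S prod_top (g \<circ> fst)" by (rule continuous_map_compose[OF fstS g])
    moreover have "continuous_map prod_top euclideanreal (\<lambda>x. x m)"
      unfolding prod_top_def by (rule continuous_map_product_projection) simp
    ultimately have "continuous_map ?S euclideanreal ((\<lambda>x. x m) \<circ> (g \<circ> fst))"
      by (rule continuous_map_compose)
    then show ?thesis by (simp add: o_def)
  qed
  have xcoord: "continuous_map ?S euclideanreal (\<lambda>p. snd p m)" for m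
  proof -
    have "continuous_map P euclideanreal ((\<lambda>x. x m) \<circ> snd)" unfolding P_def
      by (rule continuous_map_compose[OF continuous_map_snd continuous_coord_l2])
    then show ?thesis by (simp add: o_def continuous_map_from_subtopology)
  qed
  define t where "t k c n p = (\<Sum>i<n. ((\<Prod>j<k. g (fst p) (i + j)) * snd p (i + k) - c i)\<^sup>2)"
    for k and c :: "nat \<Rightarrow> real" and n and p :: "(nat \<Rightarrow> real) \<times> (nat \<Rightarrow> real)"
  have tcont: "continuous_map ?S euclideanreal (t k c n)" for k c n
    unfolding t_def by (intro continuous_intros gcoord xcoord) simp_all
  define Ob where "Ob k c n r = {p \<in> topspace P. fst p \<in> B0 \<and> t k c n p > r}" for k c n r
  have BB: "{p \<in> topspace P. fst p \<in> B0} \<in> borel_sets_of P"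
    unfolding P_def by (rule borel_preimage[OF continuous_map_fst B0])
  have Oborel: "Ob k c n r \<in> borel_sets_of P" for k c n r
  proof -
    have "openin ?S {p \<in> topspace ?S. t k c n p \<in> {r<..}}"
      by (rule openin_continuous_map_preimage[OF tcont]) (simp add: open_openin[symmetric])
    then obtain U where U: "openin P U" "{p \<in> topspace ?S. t k c n p \<in> {r<..}} = U \<inter> (B0 \<times> UNIV)"
      unfolding openin_subtopology by blast
    have Usub: "U \<subseteq> topspace P" using U(1) by (rule openin_subset)
    have "Ob k c n r = U \<inter> {p \<in> topspace P. fst p \<in> B0}"
    proof -
      have "Ob k c n r = {p \<in> topspace ?S. t k c n p \<in> {r<..}}" 
        by (auto simp: Ob_def)
      also have "\<dots> = U \<inter> (B0 \<times> UNIV)" by (rule U(2))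
      also have "\<dots> = U \<inter> {p \<in> topspace P. fst p \<in> B0}" using Usub by auto
      finally show ?thesis .
    qed
    then show ?thesis using PS.Int[OF borel_open[OF U(1)] BB] by simp
  qed
  define C where "C = {p \<in> topspace P. fst p \<in> B0 \<and> snd p \<notin> HC (g (fst p))}"
  have Ceq: "C = (\<Union>c\<in>l2D. \<Union>r\<in>\<rat> \<inter> {0<..}. \<Inter>k. \<Union>n. Ob k c n r)"
  proof (rule set_eqI)
    fix p
    show "p \<in> C \<longleftrightarrow> p \<in> (\<Union>c\<in>l2D. \<Union>r\<in>\<rat> \<inter> {0<..}. \<Inter>k. \<Union>n. Ob k c n r)"
    proof (cases "p \<in> topspace P \<and> fst p \<in> B0")
      case False
      then show ?thesis by (auto simp: C_def Ob_def)
    next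
      case True
      then have xl2: "snd p \<in> l2" and wl: "g (fst p) \<in> linfty" 
        using topP gW assms(1) by auto
      have tt: "t k c n p = (\<Sum>i<n. ((B (g (fst p)) ^^ k) (snd p) i - c i)\<^sup>2)" for k c n
        by (simp add: t_def B_pow)
      have gt: "(\<Sum>i. ((B (g (fst p)) ^^ k) (snd p) i - c i)\<^sup>2) > r \<longleftrightarrow> (\<exists>n. t k c n p > r)"
        if "c \<in> l2D" for k c r
      proof -
        have "c \<in> l2" using that l2D_sub by blast
        then have "summable (\<lambda>i. ((B (g (fst p)) ^^ k) (snd p) i - c i)\<^sup>2)"
          using l2_diff[OF B_pow_l2[OF wl xl2] \<open>c \<in> l2\<close>] by (simp add: l2_iff)
        then show ?thesis unfolding tt by (rule nonneg_suminf_gt) simp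
      qed
      have "p \<in> C \<longleftrightarrow> snd p \<notin> HC (g (fst p))" using True by (simp add: C_def)
      also have "\<dots> \<longleftrightarrow> (\<exists>c\<in>l2D. \<exists>r\<in>\<rat>. r > 0 \<and> (\<forall>k. \<exists>n. t k c n p > r))"
        using notHC_iff[OF wl xl2] gt by auto
      also have "\<dots> \<longleftrightarrow> p \<in> (\<Union>c\<in>l2D. \<Union>r\<in>\<rat> \<inter> {0<..}. \<Inter>k. \<Union>n. Ob k c n r)"
        using True by (auto simp: Ob_def)
      finally show ?thesis .
    qed
  qed
  have Cborel: "C \<in> borel_sets_of P"
    unfolding Ceq
  proof (intro PS.countable_UN'' PS.countable_INT PS.countable_nat_UN)
    show "countable l2D" by (rule countable_l2D)
    show "countable (\<rat> \<inter> {0<..} :: real set)" using countable_rat by (rule countable_subset[rotated]) simp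
  qed (auto intro: Oborel)
  define Y where "Y = pullback_topology UNIV unpair P"
  have hm: "homeomorphic_maps Y P unpair pairf" unfolding Y_def by (rule pullback_homeo)
  then have YP: "Y homeomorphic_space P" unfolding homeomorphic_space_def by blast
  have unc: "continuous_map Y P unpair" using hm by (simp add: homeomorphic_maps_def)
  have PolP: "Polish_space P"
    using Y0 Polish_l2_top unfolding Polish_space_def P_def
    by (simp add: completely_metrizable_space_prod_topology separable_prod)
  have PolY: "Polish_space Y"
    using PolP homeomorphic_completely_metrizable_space[OF YP] homeomorphic_separable_space[OF YP]
    unfolding Polish_space_def by simp
  define BB where "BB = {h \<in> topspace Y. unpair h \<in> C}"
  have BBb: "BB \<in> borel_sets_of Y" unfolding BB_def by (rule borel_preimage[OF unc Cborel])
  define f where "f h = snd (unpair h)" for h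
  have fc: "continuous_map (subtopology Y BB) l2_top f"
  proof -
    have "continuous_map Y l2_top (snd \<circ> unpair)" unfolding P_def
      using continuous_map_compose[OF unc[unfolded P_def] continuous_map_snd] .
    then show ?thesis by (simp add: o_def f_def[abs_def] continuous_map_from_subtopology)
  qed
  have topY: "h \<in> topspace Y \<longleftrightarrow> unpair h \<in> topspace P" for h
    by (simp add: Y_def topspace_pullback_topology)
  have img: "f ` BB = topspace l2_top - HC_star W"
  proof (rule set_eqI, rule iffI)
    fix x assume "x \<in> f ` BB"
    then obtain h where h: "h \<in> BB" "x = f h" by blast
    then have p: "unpair h \<in> C" by (simp add: BB_def)
    then have pp: "unpair h \<in> topspace P" "fst (unpair h) \<in> B0" "snd (unpair h) \<notin> HC (g (fst (unpair h)))"
      unfolding C_def by simp_all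
    then have "snd (unpair h) \<in> l2" unfolding topP by (simp add: mem_Times_iff)
    note pp = pp(2,3) this
    moreover have "g (fst (unpair h)) \<in> W" using gW \<open>fst (unpair h) \<in> B0\<close> by blast
    ultimately show "x \<in> topspace l2_top - HC_star W"
      using h(2) unfolding f_def HC_star_def topspace_l2_top by blast
  next
    fix x assume x: "x \<in> topspace l2_top - HC_star W"
    then have xl2: "x \<in> l2" by (simp add: topspace_l2_top)
    then obtain w where "w \<in> W" "x \<notin> HC w" using x by (auto simp: HC_star_def)
    then obtain a where a: "a \<in> B0" "x \<notin> HC (g a)" using gW by blast
    have "(a, x) \<in> C" using a B0sub xl2 topP by (auto simp: C_def)
    then have "pairf (a, x) \<in> BB" using topY[of "pairf (a, x)"] by (simp add: BB_def C_def)
    moreover have "f (pairf (a, x)) = x" by (simp add: f_def)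
    ultimately show "x \<in> f ` BB" by (metis image_eqI)
  qed
  have "analytic_in l2_top (topspace l2_top - HC_star W)"
    unfolding analytic_in_def using PolY BBb fc img by blast
  moreover have "HC_star W \<subseteq> topspace l2_top" by (auto simp: HC_star_def topspace_l2_top)
  ultimately show ?thesis by (simp add: coanalytic_in_def)
qed


end
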